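(* With $\Psi$, $X,Y$, $A,B,C,D$ and $\alpha,\beta,\gamma,\delta$ as follows, for every real $t$ with $|t|<\|\Psi\|^{-1}$ (where $\|\Psi\|=\sup_{|Z|=1}|\Psi Z|$ is the operator norm) one has $$\kappa(t)=\alpha+\beta t+\gamma t^2+\delta t^3-\tfrac34\sum_{n=4}^\infty t^n\langle\Psi^{n-4}D,D\rangle,$$ and this is the Taylor series of $\kappa$ at $0$. Here $A=[\Psi X,Y]+[X,\Psi Y]$, $B=[\Psi X,\Psi Y]$, $C=[\Psi X,Y]+[\Psi Y,X]$, $D=\Psi^2[X,Y]-\Psi A+B$, $\alpha=\tfrac14|[X,Y]|^2$, $\beta=-\tfrac34\langle\Psi[X,Y],[X,Y]\rangle$, $\gamma=-\tfrac34|\Psi[X,Y]|^2+\tfrac32\langle\Psi[X,Y],A\rangle-\tfrac12\langle[X,Y],B\rangle-\tfrac14|A|^2+\tfrac14|C|^2-\langle[\Psi X,X],[\Psi Y,Y]\rangle$, $\delta=-\tfrac34\langle\Psi^3[X,Y],[X,Y]\rangle+\tfrac32\langle\Psi^2[X,Y],A\rangle-\tfrac32\langle\Psi[X,Y],B\rangle-\tfrac34\langle\Psi A,A\rangle-\tfrac14\langle\Psi C,C\rangle+\langle\Psi[\Psi X,X],[\Psi Y,Y]\rangle+\langle A,B\rangle$.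
   Context: $G$ is a compact Lie group with Lie algebra $\mathfrak g$ and bi-invariant metric $h_0$; $\langle Z_1,Z_2\rangle=h_0(Z_1,Z_2)$, $|Z|^2=\langle Z,Z\rangle$. A left-invariant metric $h$ corresponds to the $h_0$-self-adjoint positive definite $\Phi$ with $h(X,Y)=\langle\Phi X,Y\rangle$ on $\mathfrak g$. An inverse-linear path is $\Phi_t=(I-t\Psi)^{-1}$ with $\Psi$ $h_0$-self-adjoint; $h_t$ is the left-invariant metric with matrix $\Phi_t$. The unnormalized sectional curvature is $k_h(Z_1,Z_2)=h(R_h(Z_1,Z_2)Z_2,Z_1)$, and for fixed $X,Y\in\mathfrak g$, $\kappa(t)=k_{h_t}(\Phi_t^{-1}X,\Phi_t^{-1}Y)$. *)

theory Defs
  imports "HOL-Analysis.Analysis"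
begin

text \<open>Left-invariant geometry on a Lie group, expressed on its Lie algebra.
  The Lie algebra is a finite-dimensional real inner product space (type class
  euclidean_space, inner product = bi-invariant metric h0) with bracket br.
  A left-invariant metric is given by h(U,V) = inner (Phi U) V.\<close>

definition metric_of :: "('a::real_inner \<Rightarrow> 'a) \<Rightarrow> 'a \<Rightarrow> 'a \<Rightarrow> real" where
  "metric_of Phi = (\<lambda>U V. inner (Phi U) V)"

text \<open>Levi-Civita connection on left-invariant vector fields: the unique
  torsion-free connection compatible with h (h(Y,Z) is constant for
  left-invariant fields, so X h(Y,Z) = 0).\<close>
definition LC :: "('a \<Rightarrow> 'a \<Rightarrow> 'a::real_vector) \<Rightarrow> ('a \<Rightarrow> 'a \<Rightarrow> real) \<Rightarrow> 'a \<Rightarrow> 'a \<Rightarrow> 'a" where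
  "LC br h = (THE nb. (\<forall>X Y. nb X Y - nb Y X = br X Y) \<and>
                      (\<forall>X Y Z. h (nb X Y) Z + h Y (nb X Z) = 0))"

definition curvR :: "('a \<Rightarrow> 'a \<Rightarrow> 'a::real_vector) \<Rightarrow> ('a \<Rightarrow> 'a \<Rightarrow> real) \<Rightarrow> 'a \<Rightarrow> 'a \<Rightarrow> 'a \<Rightarrow> 'a" where
  "curvR br h X Y Z = LC br h X (LC br h Y Z) - LC br h Y (LC br h X Z) - LC br h (br X Y) Z"

definition seck :: "('a \<Rightarrow> 'a \<Rightarrow> 'a::real_vector) \<Rightarrow> ('a \<Rightarrow> 'a \<Rightarrow> real) \<Rightarrow> 'a \<Rightarrow> 'a \<Rightarrow> real" where
  "seck br h Z1 Z2 = h (curvR br h Z1 Z2 Z2) Z1"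

definition vA :: "('a \<Rightarrow> 'a \<Rightarrow> 'a) \<Rightarrow> ('a \<Rightarrow> 'a) \<Rightarrow> 'a \<Rightarrow> 'a \<Rightarrow> 'a::real_vector" where
  "vA br Psi X Y = br (Psi X) Y + br X (Psi Y)"
definition vB :: "('a \<Rightarrow> 'a \<Rightarrow> 'a) \<Rightarrow> ('a \<Rightarrow> 'a) \<Rightarrow> 'a \<Rightarrow> 'a \<Rightarrow> 'a::real_vector" where
  "vB br Psi X Y = br (Psi X) (Psi Y)"
definition vC :: "('a \<Rightarrow> 'a \<Rightarrow> 'a) \<Rightarrow> ('a \<Rightarrow> 'a) \<Rightarrow> 'a \<Rightarrow> 'a \<Rightarrow> 'a::real_vector" where
  "vC br Psi X Y = br (Psi X) Y + br (Psi Y) X"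
definition vD :: "('a \<Rightarrow> 'a \<Rightarrow> 'a) \<Rightarrow> ('a \<Rightarrow> 'a) \<Rightarrow> 'a \<Rightarrow> 'a \<Rightarrow> 'a::real_vector" where
  "vD br Psi X Y = Psi (Psi (br X Y)) - Psi (vA br Psi X Y) + vB br Psi X Y"

end

theory Submission
  imports Defs
begin


lemma koszul:
  fixes nb br :: "'a::real_vector \<Rightarrow> 'a \<Rightarrow> 'a" and h :: "'a \<Rightarrow> 'a \<Rightarrow> real"
  assumes tor: "\<And>X Y. nb X Y - nb Y X = br X Y"
    and met: "\<And>X Y Z. h (nb X Y) Z + h Y (nb X Z) = 0"
    and sym: "\<And>U V. h U V = h V U"
    and lin: "\<And>U V Z. h (U - V) Z = h U Z - h V Z"
  shows "2 * h (nb X Y) Z = h (br X Y) Z - h (br Y Z) X + h (br Z X) Y"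
proof -
  have m: "\<And>X Y Z. h (nb X Y) Z = - h (nb X Z) Y" using met sym by (metis add_eq_0_iff)
  have t: "\<And>X Y Z. h (nb X Y) Z - h (nb Y X) Z = h (br X Y) Z" using tor lin by metis
  show ?thesis using m[of X Y Z] m[of Y X Z] m[of Z Y X] m[of X Z Y]
    t[of X Y Z] t[of Y Z X] t[of Z X Y] by linarith
qed

locale lsetup =
  fixes br :: "'a::euclidean_space \<Rightarrow> 'a \<Rightarrow> 'a" and Psi Phi :: "'a \<Rightarrow> 'a" and t :: real
  assumes bil: "bilinear br"
    and antisym: "\<And>U V. br U V = - br V U"
    and adinv: "\<And>U V W. inner (br U V) W = inner U (br V W)"
    and linPsi: "linear Psi"
    and selfadj: "\<And>U V. inner (Psi U) V = inner U (Psi V)"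
    and PhiR: "\<And>Z. Phi Z - t *\<^sub>R Psi (Phi Z) = Z"
    and PhiL: "\<And>Z. Phi (Z - t *\<^sub>R Psi Z) = Z"
begin

lemmas brs = bilinear_ladd[OF bil] bilinear_radd[OF bil] bilinear_lmul[OF bil] bilinear_rmul[OF bil]
  bilinear_lneg[OF bil] bilinear_rneg[OF bil] bilinear_lsub[OF bil] bilinear_rsub[OF bil]
  bilinear_lzero[OF bil] bilinear_rzero[OF bil]

lemmas Psis = linear_add[OF linPsi] linear_diff[OF linPsi] linear_scale[OF linPsi] linear_neg[OF linPsi] linear_0[OF linPsi]

definition Pi where "Pi Z = Z - t *\<^sub>R Psi Z"

lemma Pi_lin: "Pi (a + b) = Pi a + Pi b" "Pi (c *\<^sub>R a) = c *\<^sub>R Pi a" "Pi (a - b) = Pi a - Pi b" "Pi 0 = 0"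
  by (simp_all add: Pi_def Psis algebra_simps)

lemma PiPhi: "Pi (Phi Z) = Z" using PhiR by (simp add: Pi_def)
lemma PhiPi: "Phi (Pi Z) = Z" using PhiL by (simp add: Pi_def)

lemma Phi_add: "Phi (a + b) = Phi a + Phi b"
  by (metis PhiPi PiPhi Pi_lin(1))
lemma Phi_scale: "Phi (c *\<^sub>R a) = c *\<^sub>R Phi a"
  by (metis PhiPi PiPhi Pi_lin(2))
lemma Phi_diff: "Phi (a - b) = Phi a - Phi b"
  by (metis PhiPi PiPhi Pi_lin(3))
lemma Phi_0: "Phi 0 = 0"
  by (metis PhiPi Pi_lin(4))

lemma Pi_sa: "inner (Pi U) V = inner U (Pi V)"
  by (simp add: Pi_def inner_diff_left inner_diff_right selfadj)

lemma Phi_sa: "inner (Phi U) V = inner U (Phi V)"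
  by (metis PiPhi Pi_sa)

lemma brr: "br U U = 0"
proof -
  have "br U U + br U U = 0" using antisym[of U U] by (simp add: eq_neg_iff_add_eq_0)
  then have "2 *\<^sub>R br U U = 0" by (simp add: scaleR_2)
  then show ?thesis by simp
qed

lemma brinner: "inner (br U V) W = - inner V (br U W)"
  by (metis adinv antisym inner_minus_left)

definition nb0 where "nb0 U V = (1/2) *\<^sub>R (br U V + Pi (br U (Phi V) + br V (Phi U)))"

lemma Phi_nb0: "Phi (nb0 U V) = (1/2) *\<^sub>R (Phi (br U V) + br U (Phi V) + br V (Phi U))"
  by (simp add: nb0_def Phi_scale Phi_add PhiPi algebra_simps)

abbreviation "h \<equiv> metric_of Phi"

lemma h_sym: "h U V = h V U"
  by (metis metric_of_def Phi_sa inner_commute)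

lemma h_diff: "h (U - V) Z = h U Z - h V Z"
  by (simp add: metric_of_def Phi_diff inner_diff_left)

lemma nb0_tor: "nb0 X Y - nb0 Y X = br X Y"
proof -
  have "nb0 X Y - nb0 Y X = (1/2) *\<^sub>R (br X Y - br Y X)"
    by (simp add: nb0_def algebra_simps)
  also have "\<dots> = br X Y" using antisym[of Y X] by simp
  finally show ?thesis .
qed

lemma nb0_met: "h (nb0 X Y) Z + h Y (nb0 X Z) = 0"
proof -
  have "h (nb0 X Y) Z + h Y (nb0 X Z) = inner (Phi (nb0 X Y)) Z + inner Y (Phi (nb0 X Z))"
    by (simp add: metric_of_def Phi_sa)
  also have "\<dots> = (1/2) * (inner (br X Y) (Phi Z) + inner Y (br X (Phi Z))
      + (inner (br X (Phi Y)) Z + inner (Phi Y) (br X Z))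
      + (inner (br Y (Phi X)) Z + inner Y (br Z (Phi X))))"
    by (simp add: Phi_nb0 inner_add_left inner_add_right Phi_sa algebra_simps)
  also have "\<dots> = 0"
    using brinner[of X Y "Phi Z"] brinner[of X "Phi Y" Z] adinv[of Y "Phi X" Z] antisym[of Z "Phi X"]
    by (simp add: inner_minus_right)
  finally show ?thesis .
qed

lemma LC_eq: "LC br h = nb0"
  unfolding LC_def
proof (rule the_equality)
  show "(\<forall>X Y. nb0 X Y - nb0 Y X = br X Y) \<and> (\<forall>X Y Z. h (nb0 X Y) Z + h Y (nb0 X Z) = 0)"
    using nb0_tor nb0_met by blast
next
  fix nb assume a: "(\<forall>X Y. nb X Y - nb Y X = br X Y) \<and> (\<forall>X Y Z. h (nb X Y) Z + h Y (nb X Z) = 0)"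
  show "nb = nb0"
  proof (intro ext)
    fix X Y
    have "\<And>Z. h (nb X Y - nb0 X Y) Z = 0"
    proof -
      fix Z
      have k1: "2 * h (nb X Y) Z = h (br X Y) Z - h (br Y Z) X + h (br Z X) Y"
        by (rule koszul) (use a h_sym h_diff in auto)
      have k2: "2 * h (nb0 X Y) Z = h (br X Y) Z - h (br Y Z) X + h (br Z X) Y"
        by (rule koszul) (use nb0_tor nb0_met h_sym h_diff in auto)
      have "2 * h (nb X Y) Z = 2 * h (nb0 X Y) Z" using k1 k2 by simp
      then show "h (nb X Y - nb0 X Y) Z = 0" by (simp add: h_diff)
    qed
    then have "inner (Phi (nb X Y - nb0 X Y)) (Phi (nb X Y - nb0 X Y)) = 0"
      by (simp add: metric_of_def)
    then have "Phi (nb X Y - nb0 X Y) = 0" by simp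
    then have "nb X Y - nb0 X Y = 0" by (metis PiPhi Pi_lin(4))
    then show "nb X Y = nb0 X Y" by simp
  qed
qed

lemma h_inner: "h a b = inner (Phi a) b" by (simp add: metric_of_def)
lemma h_Pi_Pi: "h (Pi a) (Pi b) = inner a (Pi b)" by (simp add: metric_of_def PhiPi)
lemma Phi_Pi_inner: "inner (Phi a) (Pi b) = inner a b" by (metis PiPhi Pi_sa)

lemma kappa_terms:
  fixes X Y :: 'a
  defines "x \<equiv> Pi X" and "y \<equiv> Pi Y"
  shows "seck br h x y = - h (nb0 y y) (nb0 x x) + h (nb0 x y) (nb0 y x) + h y (nb0 (br x y) x)"
proof -
  have "seck br h x y = h (nb0 x (nb0 y y)) x - h (nb0 y (nb0 x y)) x - h (nb0 (br x y) y) x"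
    by (simp add: seck_def curvR_def LC_eq h_diff)
  moreover have "h (nb0 x (nb0 y y)) x = - h (nb0 y y) (nb0 x x)" using nb0_met[of x "nb0 y y" x] by simp
  moreover have "h (nb0 y (nb0 x y)) x = - h (nb0 x y) (nb0 y x)" using nb0_met[of y "nb0 x y" x] by simp
  moreover have "h (nb0 (br x y) y) x = - h y (nb0 (br x y) x)" using nb0_met[of "br x y" y x] by simp
  ultimately show ?thesis by simp
qed

lemma kappa_poly:
  fixes X Y :: 'a
  defines "x \<equiv> Pi X" and "y \<equiv> Pi Y"
    and "w0 \<equiv> br X Y" and "A \<equiv> vA br Psi X Y" and "B \<equiv> vB br Psi X Y" and "C \<equiv> vC br Psi X Y"
    and "D \<equiv> vD br Psi X Y" and "P \<equiv> Psi X" and "Q \<equiv> Psi Y"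
  defines "E \<equiv> Psi w0 - A"
  defines "q \<equiv> w0 + t *\<^sub>R E"
  shows "seck br h x y = - (t^2 * inner (br Q Y) (br P X) - t^3 * inner (br Q Y) (Psi (br P X)))
     + t^2/4 * (inner C C - t * inner C (Psi C)) + 1/2 * inner (w0 - t *\<^sub>R A + t^2 *\<^sub>R B) (2 *\<^sub>R w0 - t *\<^sub>R A)
     - 3/4 * (inner q q - t * inner q (Psi q) + 2 * t^2 * inner q D + t^4 * inner (Phi D) D)"
proof -
  have Phx: "Phi x = X" and Phy: "Phi y = Y" by (simp_all add: x_def y_def PhiPi)
  have xX: "br x X = - t *\<^sub>R br P X" by (simp add: x_def Pi_def P_def brs brr)
  have yY: "br y Y = - t *\<^sub>R br Q Y" by (simp add: y_def Pi_def Q_def brs brr)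
  have nxx: "nb0 x x = Pi (br x X)"
    by (simp add: nb0_def Phx brr Pi_lin(1)[symmetric] scaleR_2[symmetric] Pi_lin(2))
  have nyy: "nb0 y y = Pi (br y Y)"
    by (simp add: nb0_def Phy brr Pi_lin(1)[symmetric] scaleR_2[symmetric] Pi_lin(2))
  have TA: "h (nb0 y y) (nb0 x x) = t^2 * inner (br Q Y) (br P X) - t^3 * inner (br Q Y) (Psi (br P X))"
    unfolding nxx nyy h_Pi_Pi by (simp add: xX yY Pi_def Psis inner_diff_right power2_eq_square power3_eq_cube algebra_simps)
  define w where "w = br x y"
  define S where "S = br x Y + br y X"
  have SC: "S = - t *\<^sub>R C"
  proof -
    have "br X Y + br Y X = 0" using antisym[of X Y] by simp
    then show ?thesis
      by (simp add: S_def C_def vC_def x_def y_def Pi_def P_def Q_def brs algebra_simps)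
  qed
  have nxy: "nb0 x y = (1/2) *\<^sub>R (w + Pi S)" by (simp only: nb0_def w_def S_def Phx Phy)
  have nyx: "nb0 y x = (1/2) *\<^sub>R (- w + Pi S)"
    unfolding nb0_def w_def S_def Phx Phy antisym[of y x] by (metis add.commute)
  have TB: "h (nb0 x y) (nb0 y x) = 1/4 * (h (Pi S) (Pi S) - h w w)"
  proof -
    have "h (nb0 x y) (nb0 y x) = 1/4 * (inner (Phi w) (- w) + inner (Phi w) (Pi S) + inner S (- w) + inner S (Pi S))"
      by (simp add: nxy nyx h_inner Phi_add Phi_scale PhiPi inner_add_left inner_add_right algebra_simps)
    also have "\<dots> = 1/4 * (h (Pi S) (Pi S) - h w w)"
      unfolding h_Pi_Pi by (simp add: h_inner Phi_Pi_inner inner_commute)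
    finally show ?thesis .
  qed
  have TB2: "h (Pi S) (Pi S) = t^2 * (inner C C - t * inner C (Psi C))"
    unfolding h_Pi_Pi by (simp add: SC Pi_def Psis inner_diff_right power2_eq_square algebra_simps)
  have TC: "h y (nb0 w x) = 1/2 * inner w (br x Y - br y X) - 1/2 * h w w"
  proof -
    have "h y (nb0 w x) = inner Y (nb0 w x)" by (simp add: h_inner Phy)
    also have "\<dots> = 1/2 * (inner Y (br w x) + inner Y (Pi (br w X + br x (Phi w))))"
      by (simp add: nb0_def Phx inner_add_right)
    also have "inner Y (Pi (br w X + br x (Phi w))) = inner y (br w X) + inner y (br x (Phi w))"
      by (simp add: y_def Pi_sa[symmetric] inner_add_right)
    also have "inner Y (br w x) = inner w (br x Y)"
    proof -
      have "inner Y (br w x) = inner (br w x) Y" by (rule inner_commute)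
      also have "\<dots> = inner w (br x Y)" by (rule adinv)
      finally show ?thesis .
    qed
    also have "inner y (br w X) = - inner w (br y X)"
    proof -
      have "inner y (br w X) = inner (br w X) y" by (rule inner_commute)
      also have "\<dots> = inner w (br X y)" by (rule adinv)
      also have "br X y = - br y X" by (rule antisym)
      finally show ?thesis by simp
    qed
    also have "inner y (br x (Phi w)) = - h w w"
    proof -
      have "inner y (br x (Phi w)) = inner (br y x) (Phi w)" by (rule adinv[symmetric])
      also have "br y x = - w" unfolding w_def by (rule antisym)
      finally show ?thesis by (simp add: h_inner inner_commute)
    qed
    finally show ?thesis by (simp add: inner_diff_right algebra_simps)
  qed
  have wexp: "w = w0 - t *\<^sub>R A + t^2 *\<^sub>R B"
    by (simp add: w_def x_def y_def Pi_def w0_def A_def B_def vA_def vB_def P_def Q_def brs algebra_simps power2_eq_square)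
  have dexp: "br x Y - br y X = 2 *\<^sub>R w0 - t *\<^sub>R A"
  proof -
    have "br Y X = - br X Y" "br Q X = - br X Q" by (rule antisym)+
    then show ?thesis
      by (simp add: x_def y_def Pi_def w0_def A_def vA_def P_def Q_def brs algebra_simps scaleR_2)
  qed
  have wPi: "w = Pi q + t^2 *\<^sub>R D"
    by (simp add: wexp q_def E_def D_def vD_def A_def[symmetric] B_def[symmetric] w0_def[symmetric]
        Pi_def Psis algebra_simps power2_eq_square)
  have hww: "h w w = inner q (Pi q) + 2 * t^2 * inner q D + t^4 * inner (Phi D) D"
  proof -
    have "h w w = inner (q + t^2 *\<^sub>R Phi D) (Pi q + t^2 *\<^sub>R D)"
      by (simp add: h_inner wPi Phi_add Phi_scale PhiPi)
    also have "\<dots> = inner q (Pi q) + t^2 * inner q D + t^2 * inner (Phi D) (Pi q) + t^4 * inner (Phi D) D"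
      by (simp add: inner_add_left inner_add_right algebra_simps power4_eq_xxxx power2_eq_square)
    also have "inner (Phi D) (Pi q) = inner q D" by (simp add: Phi_Pi_inner inner_commute)
    finally show ?thesis by simp
  qed
  have Piq: "inner q (Pi q) = inner q q - t * inner q (Psi q)" by (simp add: Pi_def inner_diff_right)
  have K: "seck br h x y = - h (nb0 y y) (nb0 x x) + h (nb0 x y) (nb0 y x) + h y (nb0 w x)"
    unfolding w_def x_def y_def by (rule kappa_terms)
  show ?thesis
    unfolding K TA TB TB2 TC hww Piq dexp
    unfolding wexp by (simp add: algebra_simps) (simp add: field_simps)
qed

lemma kappa_final:
  fixes X Y :: 'a
  shows "seck br h (Pi X) (Pi Y) =
     (1/4 * (norm (br X Y))\<^sup>2) + (- 3/4 * inner (Psi (br X Y)) (br X Y)) * t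
   + (- 3/4 * (norm (Psi (br X Y)))\<^sup>2 + 3/2 * inner (Psi (br X Y)) (vA br Psi X Y)
              - 1/2 * inner (br X Y) (vB br Psi X Y) - 1/4 * (norm (vA br Psi X Y))\<^sup>2 + 1/4 * (norm (vC br Psi X Y))\<^sup>2
              - inner (br (Psi X) X) (br (Psi Y) Y)) * t\<^sup>2
   + (- 3/4 * inner (Psi (Psi (Psi (br X Y)))) (br X Y)
              + 3/2 * inner (Psi (Psi (br X Y))) (vA br Psi X Y) - 3/2 * inner (Psi (br X Y)) (vB br Psi X Y)
              - 3/4 * inner (Psi (vA br Psi X Y)) (vA br Psi X Y) - 1/4 * inner (Psi (vC br Psi X Y)) (vC br Psi X Y)
              + inner (Psi (br (Psi X) X)) (br (Psi Y) Y) + inner (vA br Psi X Y) (vB br Psi X Y)) * t ^ 3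
   - 3/4 * (t ^ 4 * inner (Phi (vD br Psi X Y)) (vD br Psi X Y))"
proof -
  define w0 where "w0 = br X Y"
  define A where "A = vA br Psi X Y"
  define B where "B = vB br Psi X Y"
  define C where "C = vC br Psi X Y"
  define D where "D = vD br Psi X Y"
  define P where "P = Psi X"
  define Q where "Q = Psi Y"
  define E where "E = Psi w0 - A"
  define q where "q = w0 + t *\<^sub>R E"
  have K: "seck br h (Pi X) (Pi Y) = - (t^2 * inner (br Q Y) (br P X) - t^3 * inner (br Q Y) (Psi (br P X)))
     + t^2/4 * (inner C C - t * inner C (Psi C)) + 1/2 * inner (w0 - t *\<^sub>R A + t^2 *\<^sub>R B) (2 *\<^sub>R w0 - t *\<^sub>R A)
     - 3/4 * (inner q q - t * inner q (Psi q) + 2 * t^2 * inner q D + t^4 * inner (Phi D) D)"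
    unfolding w0_def A_def B_def C_def D_def P_def Q_def q_def E_def by (rule kappa_poly)
  have DE: "D = Psi E + B" by (simp add: D_def E_def vD_def w0_def A_def B_def Psis)
  have e1: "inner q q = inner w0 w0 + 2 * t * inner w0 E + t^2 * inner E E"
    by (simp add: q_def inner_add_left inner_add_right inner_commute[of E w0] power2_eq_square algebra_simps)
  have e2: "inner q (Psi q) = inner w0 (Psi w0) + 2 * t * inner E (Psi w0) + t^2 * inner E (Psi E)"
  proof -
    have "inner w0 (Psi E) = inner E (Psi w0)" by (metis selfadj inner_commute)
    then show ?thesis
      by (simp add: q_def Psis inner_add_left inner_add_right power2_eq_square algebra_simps)
  qed
  have e3: "inner q D = inner w0 D + t * inner E D"
    by (simp add: q_def inner_add_left)
  have sa1: "inner (Psi w0) A = inner w0 (Psi A)" by (rule selfadj)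
  have sa2: "inner w0 (Psi (Psi w0)) = inner (Psi w0) (Psi w0)" by (rule selfadj[symmetric])
  have e4: "inner E E - 2 * inner E (Psi w0) = inner A A - inner (Psi w0) (Psi w0)"
    by (simp add: E_def inner_diff_left inner_diff_right inner_commute[of A "Psi w0"] algebra_simps)
  have e5: "inner w0 D = inner (Psi w0) (Psi w0) - inner (Psi w0) A + inner w0 B"
    by (simp add: DE E_def Psis inner_diff_right inner_add_right sa1 sa2)
  have sa3: "inner (Psi w0) (Psi (Psi w0)) = inner (Psi (Psi (Psi w0))) w0"
    by (metis selfadj inner_commute)
  have sa4: "inner (Psi w0) (Psi A) = inner (Psi (Psi w0)) A" by (rule selfadj[symmetric])
  have sa5: "inner A (Psi (Psi w0)) = inner (Psi (Psi w0)) A" by (rule inner_commute)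
  have sa6: "inner A (Psi A) = inner (Psi A) A" by (rule inner_commute)
  have sa7: "inner (Psi A) (Psi w0) = inner (Psi (Psi w0)) A" by (metis selfadj inner_commute)
  have e6: "inner E (Psi E) = inner (Psi (Psi (Psi w0))) w0 - 2 * inner (Psi (Psi w0)) A + inner (Psi A) A"
    by (simp add: E_def Psis inner_diff_right inner_diff_left sa3 sa4 sa5 sa6 sa7)
  have e7: "inner E D = inner E (Psi E) + inner (Psi w0) B - inner A B"
    by (simp add: DE inner_add_right E_def inner_diff_left)
  have e8: "inner (w0 - t *\<^sub>R A + t^2 *\<^sub>R B) (2 *\<^sub>R w0 - t *\<^sub>R A)
     = 2 * inner w0 w0 - 3 * t * inner w0 A + t^2 * (inner A A + 2 * inner w0 B) - t^3 * inner A B"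
    by (simp add: inner_add_left inner_add_right inner_diff_left inner_diff_right
        inner_commute[of A w0] inner_commute[of B w0] inner_commute[of B A] power2_eq_square power3_eq_cube algebra_simps)
  have e9: "inner C (Psi C) = inner (Psi C) C" by (rule inner_commute)
  have e10: "inner (br Q Y) (br P X) = inner (br (Psi X) X) (br (Psi Y) Y)"
    by (simp add: P_def Q_def inner_commute)
  have e11: "inner (br Q Y) (Psi (br P X)) = inner (Psi (br (Psi X) X)) (br (Psi Y) Y)"
    by (simp add: P_def Q_def inner_commute)
  have e12: "inner w0 (Psi w0) = inner (Psi w0) w0" by (rule inner_commute)
  have e13: "inner w0 E = inner (Psi w0) w0 - inner w0 A"
    by (simp add: E_def inner_diff_right inner_commute)
  have e14: "inner E E = inner (Psi w0) (Psi w0) - 2 * inner (Psi w0) A + inner A A"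
    by (simp add: E_def inner_diff_left inner_diff_right inner_commute[of A "Psi w0"] algebra_simps)
  have e15: "inner E (Psi w0) = inner (Psi w0) (Psi w0) - inner (Psi w0) A"
    by (simp add: E_def inner_diff_left inner_commute[of A "Psi w0"])
  show ?thesis
    unfolding K e1 e2 e3 e5 e7 e6 e8 e9 e10 e11 e12 e13 e14 e15
    unfolding w0_def[symmetric] A_def[symmetric] B_def[symmetric] C_def[symmetric] D_def[symmetric]
      power2_norm_eq_inner
    by (simp add: field_simps power2_eq_square power3_eq_cube power4_eq_xxxx)
qed

end



lemma funpow_norm_le:
  fixes Psi :: "'a::euclidean_space \<Rightarrow> 'a"
  assumes "linear Psi"
  shows "norm ((Psi ^^ n) v) \<le> onorm Psi ^ n * norm v"
proof (induction n)
  case 0 then show ?case by simp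
next
  case (Suc n)
  have bl: "bounded_linear Psi" using assms linear_conv_bounded_linear by blast
  have "norm ((Psi ^^ Suc n) v) = norm (Psi ((Psi ^^ n) v))" by simp
  also have "\<dots> \<le> onorm Psi * norm ((Psi ^^ n) v)" by (rule onorm[OF bl])
  also have "\<dots> \<le> onorm Psi * (onorm Psi ^ n * norm v)"
    by (rule mult_left_mono[OF Suc onorm_pos_le[OF bl]])
  finally show ?case by (simp add: algebra_simps)
qed

lemma neumann:
  fixes Psi :: "'a::euclidean_space \<Rightarrow> 'a"
  assumes lin: "linear Psi" and ht: "\<bar>t\<bar> * onorm Psi < 1"
  shows "summable (\<lambda>n. t ^ n *\<^sub>R (Psi ^^ n) v)"
    and "(\<Sum>n. t ^ n *\<^sub>R (Psi ^^ n) v) - t *\<^sub>R Psi (\<Sum>n. t ^ n *\<^sub>R (Psi ^^ n) v) = v"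
proof -
  have bl: "bounded_linear Psi" using lin linear_conv_bounded_linear by blast
  have on: "0 \<le> onorm Psi" by (rule onorm_pos_le[OF bl])
  define g where "g n = t ^ n *\<^sub>R (Psi ^^ n) v" for n
  have "norm (g n) \<le> (\<bar>t\<bar> * onorm Psi) ^ n * norm v" for n
  proof -
    have "norm (g n) = \<bar>t\<bar> ^ n * norm ((Psi ^^ n) v)" by (simp add: g_def power_abs)
    also have "\<dots> \<le> \<bar>t\<bar> ^ n * (onorm Psi ^ n * norm v)"
      by (rule mult_left_mono[OF funpow_norm_le[OF lin]]) simp
    finally show ?thesis by (simp add: power_mult_distrib mult.assoc)
  qed
  moreover have "summable (\<lambda>n. (\<bar>t\<bar> * onorm Psi) ^ n * norm v)"
    by (rule summable_mult2, rule summable_geometric) (use ht on in simp)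
  ultimately have sg: "summable g"
    using summable_comparison_test'[where g="\<lambda>n. (\<bar>t\<bar> * onorm Psi) ^ n * norm v" and f=g and N=0] by blast
  have gf: "g = (\<lambda>n. t ^ n *\<^sub>R (Psi ^^ n) v)" by (simp add: g_def fun_eq_iff)
  show "summable (\<lambda>n. t ^ n *\<^sub>R (Psi ^^ n) v)" using sg by (simp add: gf)
  have blT: "bounded_linear (\<lambda>z. t *\<^sub>R Psi z)"
    by (intro bounded_linear_compose[OF bounded_linear_scaleR_right bl])
  have "(\<Sum>n. g (Suc n)) = suminf g - g 0" by (rule suminf_split_head[OF sg])
  moreover have "(\<Sum>n. g (Suc n)) = t *\<^sub>R Psi (suminf g)"
  proof -
    have "(\<Sum>n. g (Suc n)) = (\<Sum>n. t *\<^sub>R Psi (g n))"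
      by (simp add: g_def linear_scale[OF lin])
    also have "\<dots> = t *\<^sub>R Psi (suminf g)"
      by (rule bounded_linear.suminf[OF blT sg, symmetric])
    finally show ?thesis .
  qed
  ultimately have H: "suminf g - g 0 = t *\<^sub>R Psi (suminf g)" by simp
  have "suminf g - t *\<^sub>R Psi (suminf g) = g 0" unfolding H[symmetric] by simp
  then show "(\<Sum>n. t ^ n *\<^sub>R (Psi ^^ n) v) - t *\<^sub>R Psi (\<Sum>n. t ^ n *\<^sub>R (Psi ^^ n) v) = v"
    by (simp add: gf)
qed

lemma fps_radius_iter: "fps_conv_radius (G :: real fps) \<le> fps_conv_radius ((fps_deriv ^^ n) G)"
proof (induction n)
  case 0 then show ?case by simp
next
  case (Suc n) then show ?case using fps_conv_radius_deriv[of "(fps_deriv ^^ n) G"] by simp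
qed

lemma higher_eval:
  fixes G :: "real fps"
  shows "norm z < fps_conv_radius G \<Longrightarrow> (deriv ^^ n) (eval_fps G) z = eval_fps ((fps_deriv ^^ n) G) z"
proof (induction n arbitrary: z)
  case 0 then show ?case by simp
next
  case (Suc n)
  have ev: "eventually (\<lambda>s. (deriv ^^ n) (eval_fps G) s = eval_fps ((fps_deriv ^^ n) G) s) (nhds z)"
  proof -
    have "eventually (\<lambda>s. s \<in> eball 0 (fps_conv_radius G)) (nhds z)"
      by (intro eventually_nhds_in_open open_eball) (use Suc.prems in auto)
    then show ?thesis by eventually_elim (use Suc.IH in auto)
  qed
  have "(deriv ^^ Suc n) (eval_fps G) z = deriv ((deriv ^^ n) (eval_fps G)) z" by simp
  also have "\<dots> = deriv (eval_fps ((fps_deriv ^^ n) G)) z" by (rule deriv_cong_ev[OF ev refl])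
  also have "\<dots> = eval_fps (fps_deriv ((fps_deriv ^^ n) G)) z"
  proof (rule DERIV_imp_deriv, rule has_field_derivative_eval_fps)
    show "ereal (norm z) < fps_conv_radius ((fps_deriv ^^ n) G)"
      using Suc.prems fps_radius_iter[of G n] by (meson less_le_trans)
  qed
  finally show ?case by simp
qed

theorem mainTheorem3:
  fixes br :: "'a::euclidean_space \<Rightarrow> 'a \<Rightarrow> 'a"
    and Psi :: "'a \<Rightarrow> 'a"
    and X Y :: 'a
  assumes bil: "bilinear br"
    and antisym: "\<And>U V. br U V = - br V U"
    and jacobi: "\<And>U V W. br U (br V W) + br V (br W U) + br W (br U V) = 0"
    and adinv: "\<And>U V W. inner (br U V) W = inner U (br V W)"
    and linPsi: "linear Psi"
    and selfadj: "\<And>U V. inner (Psi U) V = inner U (Psi V)"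
  defines "\<kappa> \<equiv> (\<lambda>t::real. seck br (metric_of (inv (\<lambda>Z. Z - t *\<^sub>R Psi Z)))
                          (X - t *\<^sub>R Psi X) (Y - t *\<^sub>R Psi Y))"
    and "\<alpha> \<equiv> 1/4 * (norm (br X Y))\<^sup>2"
    and "\<beta> \<equiv> - 3/4 * inner (Psi (br X Y)) (br X Y)"
    and "\<gamma> \<equiv> - 3/4 * (norm (Psi (br X Y)))\<^sup>2 + 3/2 * inner (Psi (br X Y)) (vA br Psi X Y)
              - 1/2 * inner (br X Y) (vB br Psi X Y) - 1/4 * (norm (vA br Psi X Y))\<^sup>2 + 1/4 * (norm (vC br Psi X Y))\<^sup>2
              - inner (br (Psi X) X) (br (Psi Y) Y)"
    and "\<delta> \<equiv> - 3/4 * inner (Psi (Psi (Psi (br X Y)))) (br X Y)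
              + 3/2 * inner (Psi (Psi (br X Y))) (vA br Psi X Y) - 3/2 * inner (Psi (br X Y)) (vB br Psi X Y)
              - 3/4 * inner (Psi (vA br Psi X Y)) (vA br Psi X Y) - 1/4 * inner (Psi (vC br Psi X Y)) (vC br Psi X Y)
              + inner (Psi (br (Psi X) X)) (br (Psi Y) Y) + inner (vA br Psi X Y) (vB br Psi X Y)"
  shows "(\<forall>t. \<bar>t\<bar> * onorm Psi < 1 \<longrightarrow>
            summable (\<lambda>n. t ^ (n + 4) * inner ((Psi ^^ n) (vD br Psi X Y)) (vD br Psi X Y)) \<and>
            \<kappa> t = \<alpha> + \<beta> * t + \<gamma> * t\<^sup>2 + \<delta> * t ^ 3
                  - 3/4 * (\<Sum>n. t ^ (n + 4) * inner ((Psi ^^ n) (vD br Psi X Y)) (vD br Psi X Y)))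
       \<and> (\<forall>n t. \<bar>t\<bar> * onorm Psi < 1 \<longrightarrow> (deriv ^^ n) \<kappa> differentiable (at t))
       \<and> (deriv ^^ 0) \<kappa> 0 = fact 0 * \<alpha>
       \<and> (deriv ^^ 1) \<kappa> 0 = fact 1 * \<beta>
       \<and> (deriv ^^ 2) \<kappa> 0 = fact 2 * \<gamma>
       \<and> (deriv ^^ 3) \<kappa> 0 = fact 3 * \<delta>
       \<and> (\<forall>n\<ge>4. (deriv ^^ n) \<kappa> 0
              = fact n * (- 3/4 * inner ((Psi ^^ (n - 4)) (vD br Psi X Y)) (vD br Psi X Y)))"

proof -
  define D where "D = vD br Psi X Y"
  define d where "d = (\<lambda>n. inner ((Psi ^^ n) D) D)"
  have bl: "bounded_linear Psi" using linPsi linear_conv_bounded_linear by blast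
  have on: "0 \<le> onorm Psi" by (rule onorm_pos_le[OF bl])
  have key: "summable (\<lambda>n. t ^ (n + 4) * d n) \<and>
      \<kappa> t = \<alpha> + \<beta> * t + \<gamma> * t\<^sup>2 + \<delta> * t ^ 3 - 3/4 * (\<Sum>n. t ^ (n + 4) * d n)"
    if ht: "\<bar>t\<bar> * onorm Psi < 1" for t
  proof -
    define Pi where "Pi = (\<lambda>Z::'a. Z - t *\<^sub>R Psi Z)"
    have linPi: "linear Pi"
      unfolding linear_iff Pi_def by (simp add: linear_add[OF linPsi] linear_scale[OF linPsi] algebra_simps)
    have injPi: "inj Pi"
    proof (rule injI)
      fix a b assume "Pi a = Pi b"
      then have e: "a - b = t *\<^sub>R Psi (a - b)"
        by (simp add: Pi_def linear_diff[OF linPsi] algebra_simps)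
      have "norm (a - b) = \<bar>t\<bar> * norm (Psi (a - b))" by (subst e) simp
      also have "\<dots> \<le> \<bar>t\<bar> * (onorm Psi * norm (a - b))"
        by (rule mult_left_mono[OF onorm[OF bl]]) simp
      finally have "norm (a - b) \<le> (\<bar>t\<bar> * onorm Psi) * norm (a - b)" by (simp add: mult.assoc)
      then have "(1 - \<bar>t\<bar> * onorm Psi) * norm (a - b) \<le> 0" by (simp add: algebra_simps)
      moreover have "0 < 1 - \<bar>t\<bar> * onorm Psi" using ht by simp
      ultimately have "norm (a - b) \<le> 0" by (simp add: mult_le_0_iff)
      then show "a = b" by simp
    qed
    have surjPi: "surj Pi"
      by (rule linear_injective_imp_surjective) (use linPi injPi in auto)
    define Phi where "Phi = inv Pi"
    have PhiR: "\<And>Z. Phi Z - t *\<^sub>R Psi (Phi Z) = Z"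
      using surj_f_inv_f[OF surjPi] by (simp add: Phi_def Pi_def)
    have PhiL: "\<And>Z. Phi (Z - t *\<^sub>R Psi Z) = Z"
      using inv_f_f[OF injPi] by (simp add: Phi_def Pi_def)
    have Ls: "lsetup br Psi Phi t"
      unfolding lsetup_def using bil antisym adinv linPsi selfadj PhiR PhiL by blast
    have invPi: "inv (\<lambda>Z. Z - t *\<^sub>R Psi Z) = Phi" by (simp add: Phi_def Pi_def)
    have kt: "\<kappa> t = \<alpha> + \<beta> * t + \<gamma> * t\<^sup>2 + \<delta> * t ^ 3 - 3/4 * (t ^ 4 * inner (Phi D) D)"
      using lsetup.kappa_final[OF Ls, of X Y]
      unfolding \<kappa>_def \<alpha>_def \<beta>_def \<gamma>_def \<delta>_def D_def invPi lsetup.Pi_def[OF Ls] .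
    define N where "N = (\<Sum>n. t ^ n *\<^sub>R (Psi ^^ n) D)"
    have sN: "summable (\<lambda>n. t ^ n *\<^sub>R (Psi ^^ n) D)" by (rule neumann(1)[OF linPsi ht])
    have PN: "N - t *\<^sub>R Psi N = D" unfolding N_def by (rule neumann(2)[OF linPsi ht])
    have PhiD: "Phi D = N" using PhiL[of N] PN by simp
    have s1: "summable (\<lambda>n. inner (t ^ n *\<^sub>R (Psi ^^ n) D) D)"
      by (rule bounded_linear.summable[OF bounded_linear_inner_left sN])
    have i1: "inner N D = (\<Sum>n. inner (t ^ n *\<^sub>R (Psi ^^ n) D) D)"
      unfolding N_def by (rule bounded_linear.suminf[OF bounded_linear_inner_left sN])
    have s2: "summable (\<lambda>n. t ^ n * d n)" using s1 by (simp add: d_def)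
    have i2: "inner N D = (\<Sum>n. t ^ n * d n)" using i1 by (simp add: d_def)
    have fe: "(\<lambda>n. t ^ (n + 4) * d n) = (\<lambda>n. t ^ 4 * (t ^ n * d n))"
      by (simp add: fun_eq_iff power_add algebra_simps)
    have s3: "summable (\<lambda>n. t ^ (n + 4) * d n)" unfolding fe by (rule summable_mult[OF s2])
    have i3: "t ^ 4 * inner (Phi D) D = (\<Sum>n. t ^ (n + 4) * d n)"
      unfolding fe PhiD i2 by (rule suminf_mult[OF s2, symmetric])
    show ?thesis using s3 kt i3 by simp
  qed
  define c where "c n = (if n = 0 then \<alpha> else if n = 1 then \<beta> else if n = 2 then \<gamma>
      else if n = 3 then \<delta> else - 3/4 * d (n - 4))" for n
  have csums: "(\<lambda>n. c n * t ^ n) sums \<kappa> t" if ht: "\<bar>t\<bar> * onorm Psi < 1" for t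
  proof -
    from key[OF ht] have sm: "summable (\<lambda>n. t ^ (n + 4) * d n)"
      and kt: "\<kappa> t = \<alpha> + \<beta> * t + \<gamma> * t\<^sup>2 + \<delta> * t ^ 3 - 3/4 * (\<Sum>n. t ^ (n + 4) * d n)" by auto
    have fe: "(\<lambda>i. c (i + 4) * t ^ (i + 4)) = (\<lambda>i. - 3/4 * (t ^ (i + 4) * d i))"
      by (simp add: c_def fun_eq_iff)
    have "(\<lambda>i. c (i + 4) * t ^ (i + 4)) sums (- 3/4 * (\<Sum>n. t ^ (n + 4) * d n))"
      unfolding fe by (rule sums_mult[OF summable_sums[OF sm]])
    then have S: "(\<lambda>n. c n * t ^ n) sums (- 3/4 * (\<Sum>n. t ^ (n + 4) * d n) + (\<Sum>i<4. c i * t ^ i))"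
      using sums_iff_shift[of "\<lambda>n. c n * t ^ n" 4] by simp
    have "(\<Sum>i<4. c i * t ^ i) = \<alpha> + \<beta> * t + \<gamma> * t\<^sup>2 + \<delta> * t ^ 3"
      by (simp add: c_def eval_nat_numeral)
    then have "- 3/4 * (\<Sum>n. t ^ (n + 4) * d n) + (\<Sum>i<4. c i * t ^ i) = \<kappa> t"
      using kt by simp
    then show ?thesis using S by simp
  qed
  define F where "F = Abs_fps c"
  have rad: "ereal r \<le> fps_conv_radius F" if "0 < r" "r * onorm Psi < 1" for r
  proof -
    have "summable (\<lambda>n. c n * r ^ n)" using csums[of r] that by (simp add: sums_summable)
    then have "norm r \<le> conv_radius c" by (rule conv_radius_geI)
    then show ?thesis using that by (simp add: F_def fps_conv_radius_def)
  qed
  have inR: "ereal \<bar>t\<bar> < fps_conv_radius F" if ht: "\<bar>t\<bar> * onorm Psi < 1" for t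
  proof -
    obtain r where r: "\<bar>t\<bar> < r" "0 < r" "r * onorm Psi < 1"
    proof (cases "onorm Psi = 0")
      case True
      then show ?thesis using that[of "\<bar>t\<bar> + 1"] by simp
    next
      case False
      then have op: "onorm Psi > 0" using on by simp
      have "\<bar>t\<bar> < 1 / onorm Psi" using ht op by (simp add: field_simps)
      moreover have "(\<bar>t\<bar> + 1 / onorm Psi) / 2 * onorm Psi = (\<bar>t\<bar> * onorm Psi + 1) / 2"
        using op by (simp add: field_simps)
      ultimately show ?thesis using that[of "(\<bar>t\<bar> + 1 / onorm Psi) / 2"] ht op by simp
    qed
    then have "ereal \<bar>t\<bar> < ereal r" by simp
    also have "\<dots> \<le> fps_conv_radius F" by (rule rad) (use r in auto)
    finally show ?thesis .
  qed
  have evalF: "eval_fps F t = \<kappa> t" if ht: "\<bar>t\<bar> * onorm Psi < 1" for t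
    using sums_unique[OF csums[OF ht]] by (simp add: eval_fps_def F_def)
  define U where "U = {t::real. \<bar>t\<bar> * onorm Psi < 1}"
  have openU: "open U" unfolding U_def
    by (rule open_Collect_less) (intro continuous_intros)+
  have derivU: "(deriv ^^ n) \<kappa> t = eval_fps ((fps_deriv ^^ n) F) t" if tU: "t \<in> U" for n t
  proof -
    have "eventually (\<lambda>s. s \<in> U) (nhds t)" by (rule eventually_nhds_in_open[OF openU tU])
    then have "eventually (\<lambda>s. \<kappa> s = eval_fps F s) (nhds t)"
      by eventually_elim (use evalF in \<open>auto simp: U_def\<close>)
    then have "(deriv ^^ n) \<kappa> t = (deriv ^^ n) (eval_fps F) t"
      by (rule higher_deriv_cong_ev) simp
    also have "\<dots> = eval_fps ((fps_deriv ^^ n) F) t"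
      by (rule higher_eval) (use inR tU in \<open>auto simp: U_def\<close>)
    finally show ?thesis .
  qed
  have diff: "(deriv ^^ n) \<kappa> differentiable (at t)" if tU: "t \<in> U" for n t
  proof -
    have "ereal (norm t) < fps_conv_radius ((fps_deriv ^^ n) F)"
      using inR[of t] tU fps_radius_iter[of F n] by (auto simp: U_def intro: less_le_trans)
    then have "(eval_fps ((fps_deriv ^^ n) F) has_field_derivative
        eval_fps (fps_deriv ((fps_deriv ^^ n) F)) t) (at t)"
      by (rule has_field_derivative_eval_fps)
    then have "((deriv ^^ n) \<kappa> has_field_derivative
        eval_fps (fps_deriv ((fps_deriv ^^ n) F)) t) (at t)"
      by (rule has_field_derivative_transform_within_open[OF _ openU tU]) (simp add: derivU)
    then show ?thesis unfolding real_differentiable_def by blast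
  qed
  have at0: "(deriv ^^ n) \<kappa> 0 = fact n * c n" for n
  proof -
    have "0 \<in> U" by (simp add: U_def)
    then have "(deriv ^^ n) \<kappa> 0 = eval_fps ((fps_deriv ^^ n) F) 0" by (rule derivU)
    also have "\<dots> = fact n * c n" by (simp add: eval_fps_at_0 fps_0th_higher_deriv F_def)
    finally show ?thesis .
  qed
  show ?thesis
  proof (intro conjI allI impI)
    fix t :: real assume "\<bar>t\<bar> * onorm Psi < 1"
    then show "summable (\<lambda>n. t ^ (n + 4) * inner ((Psi ^^ n) (vD br Psi X Y)) (vD br Psi X Y))"
      and "\<kappa> t = \<alpha> + \<beta> * t + \<gamma> * t\<^sup>2 + \<delta> * t ^ 3
                  - 3/4 * (\<Sum>n. t ^ (n + 4) * inner ((Psi ^^ n) (vD br Psi X Y)) (vD br Psi X Y))"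
      using key[of t] by (simp_all add: d_def D_def)
  next
    fix n and t :: real assume "\<bar>t\<bar> * onorm Psi < 1"
    then show "(deriv ^^ n) \<kappa> differentiable (at t)" by (intro diff) (simp add: U_def)
  next
    fix n :: nat assume "4 \<le> n"
    then show "(deriv ^^ n) \<kappa> 0 = fact n * (- 3/4 * inner ((Psi ^^ (n - 4)) (vD br Psi X Y)) (vD br Psi X Y))"
      by (simp add: at0 c_def d_def D_def)
  qed (use at0[of 0] at0[of 1] at0[of 2] at0[of 3] in \<open>simp_all add: c_def\<close>)
qed


end
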